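(* Let $\ell\ge2$, let $A_1,\dots,A_\ell$ be pairwise disjoint finite nonempty sets, $V=A_1\cup\dots\cup A_\ell$, and $\mathcal A=\{A_1,\dots,A_\ell\}$. Let $\mathcal S$ be a family of $\ell$-element subsets of $V$ with $|S\cap A_i|=1$ for all $S\in\mathcal S$ and all $i$, such that $|S\setminus T|$ is odd for all distinct $S,T\in\mathcal S$. For $X\subseteq V$ let $\vec X\in\mathbb F_2^V$ be its characteristic vector. Suppose $|\mathcal S|$ is odd and the vectors $\{\vec X: X\in\mathcal S\cup\mathcal A\}$ satisfy a nontrivial linear dependency $\sum_{X\in\mathcal S\cup\mathcal A}\alpha(X)\vec X=0$ with $\alpha(X)\in\mathbb F_2$ not all zero. Then this dependency is unique and $\alpha(X)=1$ for every $X\in\mathcal S\cup\mathcal A$.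
   Context: $\mathbb F_2$ is the two-element field. *)

theory Defs
  imports Main "HOL-Library.Z2"
begin

text \<open>The two-element field F_2 is the type bit from HOL-Library.Z2.
  The characteristic vector of X, viewed as a function on the ground set
  (only its values on V matter, since vectors live in F_2^V).\<close>

definition charvec :: "'a set \<Rightarrow> 'a \<Rightarrow> bit" where
  "charvec X v = (if v \<in> X then 1 else 0)"

end

theory Submission
  imports Defs
begin

declare add_bit_eq_xor[simp del] mult_bit_eq_and[simp del]

lemma bit_of_nat: "(of_nat n :: bit) = (if even n then 0 else 1)"
  by (induction n) auto

lemma sum_charvec: "finite Y \<Longrightarrow> (\<Sum>v\<in>Y. charvec X v) = (of_nat (card (Y \<inter> X)) :: bit)"
  unfolding charvec_def by (simp add: sum.If_cases)

lemma bit_cases: "(b::bit) = 0 \<or> b = 1" by (cases b) auto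

lemma bit_add_self: "(b::bit) + b = 0" by (cases b) auto

theorem lemma3p2:
  fixes l :: nat
    and A :: "nat \<Rightarrow> 'a set"
    and V :: "'a set"
    and \<A> :: "'a set set"
    and \<S> :: "'a set set"
    and \<alpha> :: "'a set \<Rightarrow> bit"
  assumes l2: "l \<ge> 2"
    and A_fin: "\<forall>i\<in>{1..l}. finite (A i)"
    and A_ne: "\<forall>i\<in>{1..l}. A i \<noteq> {}"
    and A_disj: "\<forall>i\<in>{1..l}. \<forall>j\<in>{1..l}. i \<noteq> j \<longrightarrow> A i \<inter> A j = {}"
    and V_def: "V = (\<Union>i\<in>{1..l}. A i)"
    and \<A>_def: "\<A> = A ` {1..l}"
    and S_sub: "\<forall>S\<in>\<S>. S \<subseteq> V \<and> card S = l"
    and S_trans: "\<forall>S\<in>\<S>. \<forall>i\<in>{1..l}. card (S \<inter> A i) = 1"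
    and S_odd: "\<forall>S\<in>\<S>. \<forall>T\<in>\<S>. S \<noteq> T \<longrightarrow> odd (card (S - T))"
    and card_odd: "odd (card \<S>)"
    and dep: "\<forall>v\<in>V. (\<Sum>X\<in>\<S> \<union> \<A>. \<alpha> X * charvec X v) = 0"
    and nontriv: "\<exists>X\<in>\<S> \<union> \<A>. \<alpha> X \<noteq> 0"
  shows "\<forall>X\<in>\<S> \<union> \<A>. \<alpha> X = 1"
proof -
  have finS: "finite \<S>" using card_odd by (metis card.infinite even_zero)
  have finA: "finite \<A>" unfolding \<A>_def by simp
  have disjSA: "\<S> \<inter> \<A> = {}"
  proof (rule ccontr)
    assume "\<S> \<inter> \<A> \<noteq> {}"
    then have "\<exists>i\<in>{1..l}. A i \<in> \<S>" unfolding \<A>_def by auto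
    then obtain i where S: "A i \<in> \<S>" and i: "i \<in> {1..l}" by blast
    obtain j where j: "j \<in> {1..l}" "j \<noteq> i" using l2 i
      by (metis atLeastAtMost_iff le_refl one_le_numeral order.trans one_neq_zero nat_le_linear
          Suc_1 Suc_le_eq not_less_eq_eq)
    have "card (A i \<inter> A j) = 1" using S_trans S j by blast
    moreover have "A i \<inter> A j = {}" using A_disj i j by blast
    ultimately show False by simp
  qed
  have finV: "finite Y" if "Y \<subseteq> V" for Y
    using that A_fin V_def by (metis finite_UN finite_atLeastAtMost finite_subset)
  have key: "(\<Sum>X\<in>\<S>. \<alpha> X * of_nat (card (Y \<inter> X))) + (\<Sum>X\<in>\<A>. \<alpha> X * of_nat (card (Y \<inter> X))) = 0"
    if Y: "Y \<subseteq> V" for Y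
  proof -
    have fY: "finite Y" using finV Y .
    have "0 = (\<Sum>v\<in>Y. (\<Sum>X\<in>\<S> \<union> \<A>. \<alpha> X * charvec X v))"
      using dep Y by (simp add: subset_eq)
    also have "\<dots> = (\<Sum>X\<in>\<S> \<union> \<A>. \<alpha> X * (\<Sum>v\<in>Y. charvec X v))"
      by (subst sum.swap) (simp only: sum_distrib_left)
    also have "\<dots> = (\<Sum>X\<in>\<S> \<union> \<A>. \<alpha> X * of_nat (card (Y \<inter> X)))"
      using sum_charvec[OF fY] by simp
    also have "\<dots> = (\<Sum>X\<in>\<S>. \<alpha> X * of_nat (card (Y \<inter> X))) + (\<Sum>X\<in>\<A>. \<alpha> X * of_nat (card (Y \<inter> X)))"
      by (rule sum.union_disjoint[OF finS finA disjSA])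
    finally show ?thesis by simp
  qed
  define c where "c = (\<Sum>X\<in>\<S>. \<alpha> X * (of_nat l + 1)) + (\<Sum>X\<in>\<A>. \<alpha> X)"
  have constS: "\<alpha> T = c" if T: "T \<in> \<S>" for T
  proof -
    have TV: "T \<subseteq> V" using S_sub T by blast
    have h1: "(\<Sum>X\<in>\<A>. \<alpha> X * of_nat (card (T \<inter> X))) = (\<Sum>X\<in>\<A>. \<alpha> X)"
    proof (rule sum.cong)
      fix X assume "X \<in> \<A>"
      then obtain i where "i \<in> {1..l}" "X = A i" unfolding \<A>_def by auto
      then have "card (T \<inter> X) = 1" using S_trans T by blast
      then show "\<alpha> X * of_nat (card (T \<inter> X)) = \<alpha> X" by simp
    qed simp
    have cardST: "(of_nat (card (T \<inter> X)) :: bit) = of_nat l + 1" if X: "X \<in> \<S>" "X \<noteq> T" for X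
    proof -
      have fX: "finite X" using finV S_sub X by blast
      have "card (X \<inter> T) + card (X - T) = card X" using fX
        by (metis card_Diff_subset_Int Int_lower1 card_Un_disjoint Diff_disjoint Int_Diff_Un
            finite_Diff finite_Int Int_commute Diff_Int_distrib2 inf.idem card_Int_Diff)
      then have "card (T \<inter> X) + card (X - T) = l" using S_sub X by (simp add: Int_commute)
      moreover have "odd (card (X - T))" using S_odd X T by blast
      ultimately have "even (card (T \<inter> X)) \<longleftrightarrow> odd l" by presburger
      then show ?thesis by (simp add: bit_of_nat)
    qed
    have h2: "(\<Sum>X\<in>\<S>. \<alpha> X * of_nat (card (T \<inter> X))) = (\<Sum>X\<in>\<S>. \<alpha> X * (of_nat l + 1)) + \<alpha> T"
    proof -
      have "(\<Sum>X\<in>\<S>. \<alpha> X * of_nat (card (T \<inter> X))) =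
            \<alpha> T * of_nat (card (T \<inter> T)) + (\<Sum>X\<in>\<S> - {T}. \<alpha> X * of_nat (card (T \<inter> X)))"
        using finS T by (simp add: sum.remove)
      also have "(\<Sum>X\<in>\<S> - {T}. \<alpha> X * of_nat (card (T \<inter> X))) = (\<Sum>X\<in>\<S> - {T}. \<alpha> X * (of_nat l + 1))"
        using cardST by (intro sum.cong) auto
      also have "of_nat (card (T \<inter> T)) = (of_nat l :: bit)" using S_sub T by simp
      also have "(\<Sum>X\<in>\<S>. \<alpha> X * (of_nat l + 1)) = \<alpha> T * (of_nat l + 1) + (\<Sum>X\<in>\<S> - {T}. \<alpha> X * (of_nat l + 1))"
        using finS T by (simp add: sum.remove)
      ultimately show ?thesis
        by (simp add: algebra_simps)
    qed
    have "(\<Sum>X\<in>\<S>. \<alpha> X * (of_nat l + 1)) + \<alpha> T + (\<Sum>X\<in>\<A>. \<alpha> X) = 0"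
      using key[OF TV] h1 h2 by simp
    then have "\<alpha> T + c = 0" unfolding c_def by (simp add: algebra_simps)
    then show ?thesis
      by (metis add.assoc add_0 bit_add_self add.commute)
  qed
  have Asum: "(\<Sum>X\<in>\<A>. f X) = f (A i)" if i: "i \<in> {1..l}"
    and f: "\<And>X. X \<in> \<A> \<Longrightarrow> X \<noteq> A i \<Longrightarrow> f X = (0::bit)" for i f
  proof -
    have "A i \<in> \<A>" using i \<A>_def by simp
    then have "(\<Sum>X\<in>\<A>. f X) = f (A i) + (\<Sum>X\<in>\<A> - {A i}. f X)"
      using finA by (simp add: sum.remove)
    also have "(\<Sum>X\<in>\<A> - {A i}. f X) = 0" using f by (intro sum.neutral) auto
    finally show ?thesis by simp
  qed
  have disjX: "A i \<inter> X = {}" if h: "i \<in> {1..l}" "X \<in> \<A>" "X \<noteq> A i" for i X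
  proof -
    obtain j where j: "j \<in> {1..l}" "X = A j" using h(2) \<A>_def by blast
    then have "j \<noteq> i" using h(3) by blast
    then show ?thesis using A_disj j h(1) by blast
  qed
  show ?thesis
  proof (cases "c = 0")
    case True
    then have S0: "\<forall>T\<in>\<S>. \<alpha> T = 0" using constS by simp
    have "\<alpha> (A i) = 0" if i: "i \<in> {1..l}" for i
    proof -
      obtain v where v: "v \<in> A i" using A_ne i by blast
      have vV: "v \<in> V" using v i V_def by blast
      have "0 = (\<Sum>X\<in>\<S> \<union> \<A>. \<alpha> X * charvec X v)" using dep vV by simp
      also have "\<dots> = (\<Sum>X\<in>\<S>. \<alpha> X * charvec X v) + (\<Sum>X\<in>\<A>. \<alpha> X * charvec X v)"
        by (rule sum.union_disjoint[OF finS finA disjSA])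
      also have "(\<Sum>X\<in>\<S>. \<alpha> X * charvec X v) = 0" using S0 by simp
      also have "(\<Sum>X\<in>\<A>. \<alpha> X * charvec X v) = \<alpha> (A i) * charvec (A i) v"
        using i by (rule Asum) (use disjX[OF i] v in \<open>auto simp: charvec_def\<close>)
      finally show ?thesis using v by (simp add: charvec_def)
    qed
    then have "\<forall>X\<in>\<S> \<union> \<A>. \<alpha> X = 0" using S0 \<A>_def by auto
    then show ?thesis using nontriv by blast
  next
    case False
    then have c1: "c = 1" using bit_cases by blast
    then have S1: "\<forall>T\<in>\<S>. \<alpha> T = 1" using constS by simp
    have "\<alpha> (A i) = 1" if i: "i \<in> {1..l}" for i
    proof -
      have AV: "A i \<subseteq> V" using i V_def by blast
      have "(\<Sum>X\<in>\<S>. \<alpha> X * of_nat (card (A i \<inter> X))) = (\<Sum>X\<in>\<S>. (1::bit))"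
      proof (rule sum.cong)
        fix X assume X: "X \<in> \<S>"
        have "card (A i \<inter> X) = 1" using S_trans X i by (simp add: Int_commute)
        then show "\<alpha> X * of_nat (card (A i \<inter> X)) = 1" using S1 X by simp
      qed simp
      also have "\<dots> = 1" using card_odd by (simp add: bit_of_nat)
      finally have e1: "(\<Sum>X\<in>\<S>. \<alpha> X * of_nat (card (A i \<inter> X))) = 1" .
      have e2: "(\<Sum>X\<in>\<A>. \<alpha> X * of_nat (card (A i \<inter> X))) = \<alpha> (A i) * of_nat (card (A i \<inter> A i))"
        using i by (rule Asum) (use disjX[OF i] in auto)
      have "1 + \<alpha> (A i) * of_nat (card (A i)) = 0" using key[OF AV] e1 e2 by simp
      then have "\<alpha> (A i) \<noteq> 0" by (metis mult_zero_left add_0_right one_neq_zero)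
      then show ?thesis using bit_cases by blast
    qed
    then show ?thesis using S1 \<A>_def by auto
  qed
qed

end
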